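(* Let $\sigma_{01},\sigma_{12}>0$, $\sigma_{02}=\sigma_{01}+\sigma_{12}$, let $\Gamma_{11},\Gamma_{22}\ge0$ and $\Gamma_{12}=\Gamma_{21}=0$, and let $M=(M_1,M_2)$ with $M_1,M_2>0$. Then a minimizing configuration for $\overline{e_0}(M)$ cannot contain two different types of single bubbles, i.e. there are no indices $k,l$ with $m^k=(m_1^k,0)$, $m_1^k>0$, and $m^l=(0,m_2^l)$, $m_2^l>0$.
   Context: For $m=(m_1,m_2)$ with $m_1,m_2\ge0$ set $$e_0(m)=2\sigma_{01}\sqrt{\pi(m_1+m_2)}+2\sigma_{12}\sqrt{\pi m_2}+\sum_{i,j=1}^2\frac{\Gamma_{ij}m_im_j}{4\pi}.$$ $\overline{e_0}(M)=\inf\{\sum_{k\ge1}e_0(m^k): m^k=(m_1^k,m_2^k),\ m_i^k\ge0,\ \sum_k m_i^k=M_i,\ i=1,2\}$; a minimizing configuration is an admissible sequence $(m^k)$ attaining the infimum. *)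

theory Defs
  imports "HOL-Analysis.Analysis" "HOL-Library.Extended_Real"
begin

definition comp :: "real \<times> real \<Rightarrow> nat \<Rightarrow> real" where
  "comp m i = (if i = 1 then fst m else snd m)"

definition e0 :: "real \<Rightarrow> real \<Rightarrow> (nat \<Rightarrow> nat \<Rightarrow> real) \<Rightarrow> real \<times> real \<Rightarrow> real" where
  "e0 s01 s12 G m =
     2 * s01 * sqrt (pi * (fst m + snd m)) + 2 * s12 * sqrt (pi * snd m)
     + (\<Sum>i\<in>{1,2::nat}. \<Sum>j\<in>{1,2::nat}. G i j * comp m i * comp m j) / (4 * pi)"

text \<open>Admissible configurations: sequences (indexed by k, starting at 0 instead of 1)
  of nonnegative mass vectors whose components sum to M_1 and M_2.\<close>
definition admissible :: "real \<times> real \<Rightarrow> (nat \<Rightarrow> real \<times> real) \<Rightarrow> bool" where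
  "admissible M m \<longleftrightarrow>
     (\<forall>k. fst (m k) \<ge> 0 \<and> snd (m k) \<ge> 0) \<and>
     (\<lambda>k. fst (m k)) sums fst M \<and> (\<lambda>k. snd (m k)) sums snd M"

definition total_energy ::
  "real \<Rightarrow> real \<Rightarrow> (nat \<Rightarrow> nat \<Rightarrow> real) \<Rightarrow> (nat \<Rightarrow> real \<times> real) \<Rightarrow> ereal" where
  "total_energy s01 s12 G m = (\<Sum>k. ereal (e0 s01 s12 G (m k)))"

definition e0_bar :: "real \<Rightarrow> real \<Rightarrow> (nat \<Rightarrow> nat \<Rightarrow> real) \<Rightarrow> real \<times> real \<Rightarrow> ereal" where
  "e0_bar s01 s12 G M = (INF m\<in>{m. admissible M m}. total_energy s01 s12 G m)"

definition minimizing_config ::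
  "real \<Rightarrow> real \<Rightarrow> (nat \<Rightarrow> nat \<Rightarrow> real) \<Rightarrow> real \<times> real \<Rightarrow> (nat \<Rightarrow> real \<times> real) \<Rightarrow> bool" where
  "minimizing_config s01 s12 G M m \<longleftrightarrow>
     admissible M m \<and> total_energy s01 s12 G m = e0_bar s01 s12 G M"

end

theory Submission
  imports Defs
begin

lemma sqrt_sub_add: fixes a b :: real assumes "a > 0" "b > 0"
  shows "sqrt (a + b) < sqrt a + sqrt b"
proof -
  have "(sqrt (a+b))^2 < (sqrt a + sqrt b)^2"
    using assms by (simp add: power2_eq_square algebra_simps)
  then show ?thesis using assms
    by (meson power_less_imp_less_base real_sqrt_ge_zero add_nonneg_nonneg less_imp_le)
qed

lemma e0_expand:
  assumes "G 1 2 = 0" "G 2 1 = 0"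
  shows "e0 s01 s12 G (x, y) = 2 * s01 * sqrt (pi * (x + y)) + 2 * s12 * sqrt (pi * y)
     + (G 1 1 * x * x + G 2 2 * y * y) / (4 * pi)"
  using assms by (simp add: e0_def comp_def)

lemma e0_nonneg:
  assumes "G 1 2 = 0" "G 2 1 = 0" "G 1 1 \<ge> 0" "G 2 2 \<ge> 0" "s01 > 0" "s12 > 0"
    "fst p \<ge> 0" "snd p \<ge> 0"
  shows "e0 s01 s12 G p \<ge> 0"
proof -
  obtain x y where p: "p = (x, y)" by (cases p)
  have "G 1 1 * x * x \<ge> 0" "G 2 2 * y * y \<ge> 0" using assms p by auto
  then show ?thesis using assms p by (simp add: e0_expand)
qed

theorem lemma3p4:
  fixes s01 s12 s02 :: real and G :: "nat \<Rightarrow> nat \<Rightarrow> real"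
    and M :: "real \<times> real" and m :: "nat \<Rightarrow> real \<times> real"
  assumes "s01 > 0" and "s12 > 0" and "s02 = s01 + s12"
    and "G 1 1 \<ge> 0" and "G 2 2 \<ge> 0" and "G 1 2 = 0" and "G 2 1 = 0"
    and "fst M > 0" and "snd M > 0"
    and "minimizing_config s01 s12 G M m"
  shows "\<not> (\<exists>k l. snd (m k) = 0 \<and> fst (m k) > 0 \<and> fst (m l) = 0 \<and> snd (m l) > 0)"
proof
  assume "\<exists>k l. snd (m k) = 0 \<and> fst (m k) > 0 \<and> fst (m l) = 0 \<and> snd (m l) > 0"
  then obtain k l where kl: "snd (m k) = 0" "fst (m k) > 0" "fst (m l) = 0" "snd (m l) > 0" by blast
  define a where "a = fst (m k)"
  define b where "b = snd (m l)"
  have mk: "m k = (a, 0)" using kl a_def by (metis prod.collapse)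
  have ml: "m l = (0, b)" using kl b_def by (metis prod.collapse)
  have kneq: "k \<noteq> l" using kl by auto
  have ab: "a > 0" "b > 0" using kl a_def b_def by auto
  have adm: "admissible M m" and eq: "total_energy s01 s12 G m = e0_bar s01 s12 G M"
    using assms(10) unfolding minimizing_config_def by auto
  have le: "\<And>m'. admissible M m' \<Longrightarrow> total_energy s01 s12 G m \<le> total_energy s01 s12 G m'"
    unfolding eq e0_bar_def by (rule INF_lower) auto
  have nn: "\<And>p. fst p \<ge> 0 \<Longrightarrow> snd p \<ge> 0 \<Longrightarrow> e0 s01 s12 G p \<ge> 0"
    using e0_nonneg assms by blast
  define s where "s = (\<lambda>i::nat. if i = 0 then M else (0,0))"
  have s1: "(\<lambda>i. fst (s i)) = (\<lambda>i. if i = 0 then fst M else 0)" by (auto simp: s_def)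
  have s2: "(\<lambda>i. snd (s i)) = (\<lambda>i. if i = 0 then snd M else 0)" by (auto simp: s_def)
  have "admissible M s"
    unfolding admissible_def s1 s2 using assms(8,9)
    by (auto simp: s_def intro: sums_single[where f="\<lambda>_. fst M", of 0, simplified]
        sums_single[where f="\<lambda>_. snd M", of 0, simplified])
  then have "total_energy s01 s12 G m \<le> total_energy s01 s12 G s" by (rule le)
  moreover have "e0 s01 s12 G (0,0) = 0" using assms by (simp add: e0_expand)
  then have "(\<lambda>i. e0 s01 s12 G (s i)) = (\<lambda>i. if i = 0 then e0 s01 s12 G M else 0)"
    by (auto simp: s_def)
  then have "(\<lambda>i. e0 s01 s12 G (s i)) sums e0 s01 s12 G M"
    using sums_single[where f="\<lambda>_. e0 s01 s12 G M", of 0] by simp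
  then have "total_energy s01 s12 G s = ereal (e0 s01 s12 G M)"
    unfolding total_energy_def by (simp add: sums_ereal[symmetric] sums_unique[symmetric])
  ultimately have fin: "total_energy s01 s12 G m \<noteq> \<infinity>" by auto
  define f where "f = (\<lambda>i. e0 s01 s12 G (m i))"
  have fnn: "\<And>i. f i \<ge> 0" unfolding f_def using adm nn unfolding admissible_def by auto
  have fsum: "summable f" using summable_ereal[OF fnn] fin unfolding total_energy_def f_def by auto
  have Tm: "total_energy s01 s12 G m = ereal (suminf f)"
    using suminf_ereal'[OF fsum] unfolding total_energy_def f_def by simp
  define m' where "m' = m(k := (a, b), l := (0, 0))"
  have f1: "(\<lambda>i. fst (m' i)) = (\<lambda>i. fst (m i))"
    using mk ml by (auto simp: m'_def)
  have f2: "(\<lambda>i. snd (m' i)) = (\<lambda>i. snd (m i) + (if i = k then b else 0) - (if i = l then b else 0))"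
    using mk ml kneq by (auto simp: m'_def)
  have "admissible M m'"
    unfolding admissible_def f1 f2
  proof (intro conjI)
    show "\<forall>i. 0 \<le> fst (m' i) \<and> 0 \<le> snd (m' i)"
      using adm ab unfolding admissible_def m'_def by auto
    show "(\<lambda>i. fst (m i)) sums fst M" using adm unfolding admissible_def by auto
    have "(\<lambda>i. snd (m i)) sums snd M" using adm unfolding admissible_def by auto
    then have "(\<lambda>i. snd (m i) + (if i = k then b else 0) - (if i = l then b else 0)) sums (snd M + b - b)"
      by (intro sums_diff sums_add) (auto intro: sums_single[where f="\<lambda>_. b", simplified])
    then show "(\<lambda>i. snd (m i) + (if i = k then b else 0) - (if i = l then b else 0)) sums snd M"
      by simp
  qed
  then have le2: "total_energy s01 s12 G m \<le> total_energy s01 s12 G m'" by (rule le)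
  define c where "c = e0 s01 s12 G (a, b)"
  have g: "(\<lambda>i. e0 s01 s12 G (m' i)) = (\<lambda>i. f i + (if i = k then c - f k else 0) - (if i = l then f l else 0))"
    using kneq assms by (auto simp: m'_def f_def c_def e0_expand)
  have "(\<lambda>i. f i + (if i = k then c - f k else 0) - (if i = l then f l else 0)) sums (suminf f + (c - f k) - f l)"
    using fsum by (intro sums_diff sums_add summable_sums)
      (auto intro: sums_single[where f="\<lambda>_. c - f k", simplified] sums_single[where f="\<lambda>_. f l", simplified])
  then have "(\<lambda>i. e0 s01 s12 G (m' i)) sums (suminf f + (c - f k) - f l)"
    by (simp only: g)
  then have "(\<lambda>i. ereal (e0 s01 s12 G (m' i))) sums ereal (suminf f + (c - f k) - f l)"
    by (simp only: sums_ereal)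
  then have Tm': "total_energy s01 s12 G m' = ereal (suminf f + (c - f k) - f l)"
    unfolding total_energy_def by (rule sums_unique[symmetric])
  have fk: "f k = 2 * s01 * sqrt (pi * a) + G 1 1 * a * a / (4 * pi)"
    using assms by (simp add: f_def mk e0_expand)
  have fl: "f l = 2 * s01 * sqrt (pi * b) + 2 * s12 * sqrt (pi * b) + G 2 2 * b * b / (4 * pi)"
    using assms by (simp add: f_def ml e0_expand)
  have cc: "c = 2 * s01 * sqrt (pi * (a + b)) + 2 * s12 * sqrt (pi * b) + (G 1 1 * a * a + G 2 2 * b * b) / (4 * pi)"
    using assms by (simp add: c_def e0_expand)
  have "sqrt (pi * (a + b)) < sqrt (pi * a) + sqrt (pi * b)"
    using sqrt_sub_add[of "pi * a" "pi * b"] ab by (simp add: distrib_left)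
  then have neg: "2 * s01 * (sqrt (pi * (a + b)) - sqrt (pi * a) - sqrt (pi * b)) < 0"
    using assms(1) by (intro mult_pos_neg) auto
  have "c - (f k + f l) = 2 * s01 * (sqrt (pi * (a + b)) - sqrt (pi * a) - sqrt (pi * b))"
    unfolding fk fl cc by (simp add: add_divide_distrib algebra_simps)
  then have "c < f k + f l" using neg by linarith
  then have "total_energy s01 s12 G m' < total_energy s01 s12 G m" using Tm Tm' by simp
  with le2 show False by simp
qed

end
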